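(* Let $n\ge 2$, let $\Lambda$ be a positive integer, and let $V_\Lambda$ be the symmetric irreducible representation of $gl(n)$ (equivalently of $sl(n)$) whose highest weight corresponds to the Young tableau with row lengths $l_1=\Lambda$, $l_2=\dots=l_n=0$. Let $\widehat e^{\pm}_i$ ($i=1,\dots,n-1$) and $N_1,\dots,N_n$ be the crystal-basis generators of $gl(n)_{q\to 0}$ acting on $V_\Lambda$, as described in the context. Define, for $i=1,\dots,n-1$, $$E^{+}_{i}=\widehat e^{+}_{i}\,\sqrt{(N_i+1)\,N_{i+1}},\qquad E^{-}_{i}=\sqrt{(N_i+1)\,N_{i+1}}\;\widehat e^{-}_{i},\qquad H_i=N_i-N_{i+1}.$$ Then, as operators on $V_\Lambda$, these satisfy the defining relations of $sl(n)$ in the Cartan–Chevalley basis: $[H_i,E^{\pm}_j]=\pm a_{ji}E^{\pm}_j$, $[E^+_i,E^-_j]=\delta_{ij}H_i$, $[H_i,H_j]=0$, and the Serre relations $$\sum_{0\le m\le 1-a_{ij}}(-1)^m\binom{1-a_{ij}}{m}(E^{\pm}_i)^{1-a_{ij}-m}E^{\pm}_j(E^{\pm}_i)^m=0\quad(i\neq j),$$ where $(a_{ij})$ is the Cartan matrix of $sl(n)$, $a_{ii}=2$, $a_{ij}=-(\delta_{i-1,j}+\delta_{i,j-1})$ for $i\ne j$.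
   Context: For $q$ not a root of unity, $gl(n)_q$ is generated by $e^{\pm}_k$ ($k=1,\dots,n-1$) and $N_1,\dots,N_n$ with $[e^+_k,e^-_j]=\delta_{kj}[N_k-N_{k+1}]_q$, $[N_i,N_k]=0$, $[N_i,e^{\pm}_j]=\pm(\delta_{i,j}-\delta_{i-1,j})e^{\pm}_j$ and the $q$-Serre relations, where $[x]_q=(q^x-q^{-x})/(q-q^{-1})$. By Kashiwara's theory of crystal bases, in the limit $q\to 0$ there are operators $\widehat e^{\pm}_i$ (the crystal-basis generators) and a basis $\{\psi(\vec\Lambda;\vec\lambda)\}$ of each highest-weight irreducible representation with highest weight $\vec\Lambda$ such that: $h_i=N_i-N_{i+1}$ acts diagonally, $h_i\psi(\vec\Lambda;\vec\lambda)=\lambda_i\psi(\vec\Lambda;\vec\lambda)$; $\widehat e^{\pm}_i\psi(\vec\Lambda;\vec\lambda)=\psi(\vec\Lambda;\vec\lambda\pm\vec a_i)$ with $(\vec\lambda\pm\vec a_i)_j=\lambda_j\pm a_{ij}$, except that $\widehat e^+_i$ annihilates the states $\psi(\vec\Lambda;\vec\Lambda_i)$ at the top of the $i$-string and $\widehat e^-_i$ annihilates the states $\psi(\vec\Lambda;-\vec\Lambda_i)$ at the bottom of the $i$-string; consequently $\widehat e^+_i\widehat e^-_i$ (resp. $\widehat e^-_i\widehat e^+_i$) acts as the identity on all basis states not annihilated by $\widehat e^-_i$ (resp. $\widehat e^+_i$). Each basis state corresponds to a Young tableau with row lengths $l_1,\dots,l_n$ and is an eigenvector of $N_i$ with eigenvalue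 $l_i$, and $[N_i,\widehat e^{\pm}_k]=\pm(\delta_{i,k}-\delta_{i-1,k})\widehat e^{\pm}_k$. Square roots of functions of the commuting diagonal operators $N_i$ are taken on eigenvalues. *)

theory Defs
  imports Complex_Main
begin

text \<open>A state is a semistandard one-row tableau,
encoded by its occupation numbers: k i = number of boxes filled with i
(i = 1..n), k i = 0 outside 1..n, and the total is Lambda.\<close>

type_synonym state = "nat \<Rightarrow> nat"
type_synonym vec = "state \<Rightarrow> real"
type_synonym op = "vec \<Rightarrow> vec"

definition states :: "nat \<Rightarrow> nat \<Rightarrow> state set" where
  "states n Lam = {k. (\<forall>j. j \<notin> {1..n} \<longrightarrow> k j = 0) \<and> (\<Sum>j=1..n. k j) = Lam}"

definition Vsp :: "nat \<Rightarrow> nat \<Rightarrow> vec set" where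
  "Vsp n Lam = {v. \<forall>k. k \<notin> states n Lam \<longrightarrow> v k = 0}"

text \<open>Linear extension of a partial map on basis states (None = annihilation).\<close>
definition basis_op :: "nat \<Rightarrow> nat \<Rightarrow> (state \<Rightarrow> state option) \<Rightarrow> op" where
  "basis_op n Lam f v = (\<lambda>k'. \<Sum>k\<in>states n Lam. if f k = Some k' then v k else 0)"

text \<open>Diagonal operator (function of the commuting N_i, taken on eigenvalues).\<close>
definition diag_op :: "(state \<Rightarrow> real) \<Rightarrow> op" where
  "diag_op g v = (\<lambda>k. g k * v k)"

text \<open>Crystal-basis generators at q -> 0 on V_Lambda: e^+_i replaces an entry
i+1 by i, e^-_i replaces an entry i by i+1; they annihilate the top,
resp. bottom, of the i-string.\<close>
definition crys_plus :: "nat \<Rightarrow> state \<Rightarrow> state option" where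
  "crys_plus i k = (if 0 < k (i+1) then Some (k(i := k i + 1, i+1 := k (i+1) - 1)) else None)"

definition crys_minus :: "nat \<Rightarrow> state \<Rightarrow> state option" where
  "crys_minus i k = (if 0 < k i then Some (k(i := k i - 1, i+1 := k (i+1) + 1)) else None)"

definition ehat_plus :: "nat \<Rightarrow> nat \<Rightarrow> nat \<Rightarrow> op" where
  "ehat_plus n Lam i = basis_op n Lam (crys_plus i)"

definition ehat_minus :: "nat \<Rightarrow> nat \<Rightarrow> nat \<Rightarrow> op" where
  "ehat_minus n Lam i = basis_op n Lam (crys_minus i)"

definition Nop :: "nat \<Rightarrow> op" where
  "Nop i = diag_op (\<lambda>k. real (k i))"

definition Eplus :: "nat \<Rightarrow> nat \<Rightarrow> nat \<Rightarrow> op" where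
  "Eplus n Lam i = ehat_plus n Lam i \<circ> diag_op (\<lambda>k. sqrt ((real (k i) + 1) * real (k (i+1))))"

definition Eminus :: "nat \<Rightarrow> nat \<Rightarrow> nat \<Rightarrow> op" where
  "Eminus n Lam i = diag_op (\<lambda>k. sqrt ((real (k i) + 1) * real (k (i+1)))) \<circ> ehat_minus n Lam i"

definition Hop :: "nat \<Rightarrow> op" where
  "Hop i = diag_op (\<lambda>k. real (k i) - real (k (i+1)))"

definition comm :: "op \<Rightarrow> op \<Rightarrow> op" where
  "comm A B v = (\<lambda>k. A (B v) k - B (A v) k)"

definition cartan :: "nat \<Rightarrow> nat \<Rightarrow> int" where
  "cartan i j = (if i = j then 2 else if j = i - 1 \<or> j = i + 1 then -1 else 0)"

definition serre :: "op \<Rightarrow> op \<Rightarrow> int \<Rightarrow> op" where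
  "serre A B a v = (\<lambda>k. \<Sum>m = 0..nat (1 - a).
      (-1) ^ m * real (nat (1 - a) choose m) * (A ^^ (nat (1 - a) - m)) (B ((A ^^ m) v)) k)"

end

theory Submission imports Defs "HOL-Library.FuncSet" begin

definition lo :: "nat \<Rightarrow> state \<Rightarrow> state" where
  "lo i k = k(i := k i - 1, i+1 := k (i+1) + 1)"
definition ra :: "nat \<Rightarrow> state \<Rightarrow> state" where
  "ra i k = k(i := k i + 1, i+1 := k (i+1) - 1)"
definition cp :: "nat \<Rightarrow> state \<Rightarrow> real" where
  "cp i k = sqrt (real (k i) * (real (k (i+1)) + 1))"
definition cm :: "nat \<Rightarrow> state \<Rightarrow> real" where
  "cm i k = sqrt ((real (k i) + 1) * real (k (i+1)))"

lemma crys_plus_iff: "crys_plus i k0 = Some k \<longleftrightarrow> (k i \<ge> 1 \<and> k0 = lo i k)"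
proof
  assume "crys_plus i k0 = Some k"
  then have pos: "k0 (i+1) > 0" and keq: "k = k0(i := k0 i + 1, i+1 := k0 (i+1) - 1)" by (auto simp: crys_plus_def split: if_splits)
  then show "k i \<ge> 1 \<and> k0 = lo i k"
    unfolding lo_def by (auto simp: fun_eq_iff)
next
  assume h: "k i \<ge> 1 \<and> k0 = lo i k"
  then have "k0 (i+1) > 0" by (simp add: lo_def)
  then show "crys_plus i k0 = Some k" using h unfolding crys_plus_def lo_def by (auto simp: fun_eq_iff)
qed

lemma crys_minus_iff: "crys_minus i k0 = Some k \<longleftrightarrow> (k (i+1) \<ge> 1 \<and> k0 = ra i k)"
proof
  assume "crys_minus i k0 = Some k"
  then have pos: "k0 i > 0" and keq: "k = k0(i := k0 i - 1, i+1 := k0 (i+1) + 1)" by (auto simp: crys_minus_def split: if_splits)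
  then show "k (i+1) \<ge> 1 \<and> k0 = ra i k"
    unfolding ra_def by (auto simp: fun_eq_iff)
next
  assume h: "k (i+1) \<ge> 1 \<and> k0 = ra i k"
  then have "k0 i > 0" by (simp add: ra_def)
  then show "crys_minus i k0 = Some k" using h unfolding crys_minus_def ra_def by (auto simp: fun_eq_iff)
qed

lemma move_states:
  assumes ab: "a \<noteq> b" "a \<in> {1..n}" "b \<in> {1..n}" and ka: "k a \<ge> 1"
  shows "k(a := k a - 1, b := k b + 1) \<in> states n Lam \<longleftrightarrow> k \<in> states n Lam"
proof -
  let ?k' = "k(a := k a - 1, b := k b + 1)"
  have fin: "finite {1..n}" by simp
  have s1: "sum f {1..n} = f a + f b + sum f ({1..n} - {a} - {b})" for f :: "nat \<Rightarrow> nat"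
  proof -
    have "sum f {1..n} = f a + sum f ({1..n}-{a})" using ab by (intro sum.remove) auto
    moreover have "sum f ({1..n}-{a}) = f b + sum f ({1..n}-{a}-{b})" using ab by (intro sum.remove) auto
    ultimately show ?thesis by simp
  qed
  have s2: "sum ?k' ({1..n} - {a} - {b}) = sum k ({1..n} - {a} - {b})"
    by (rule sum.cong) auto
  have "sum ?k' {1..n} = sum k {1..n}"
    using s1[of ?k'] s1[of k] s2 ab ka by simp
  moreover have "(\<forall>j. j \<notin> {1..n} \<longrightarrow> ?k' j = 0) \<longleftrightarrow> (\<forall>j. j \<notin> {1..n} \<longrightarrow> k j = 0)"
    using ab by auto
  ultimately show ?thesis unfolding states_def by simp
qed

lemma finite_states: "finite (states n Lam)"
proof -
  let ?g = "\<lambda>f::nat\<Rightarrow>nat. \<lambda>j. if j \<in> {1..n} then f j else 0"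
  have "states n Lam \<subseteq> ?g ` (PiE {1..n} (\<lambda>_. {0..Lam}))"
  proof
    fix k assume k: "k \<in> states n Lam"
    have le: "k j \<le> Lam" if "j \<in> {1..n}" for j
    proof -
      have "k j \<le> (\<Sum>j=1..n. k j)" using that by (intro member_le_sum) auto
      then show ?thesis using k unfolding states_def by simp
    qed
    have "k = ?g (restrict k {1..n})" using k unfolding states_def by (auto simp: fun_eq_iff restrict_apply)
    moreover have "restrict k {1..n} \<in> PiE {1..n} (\<lambda>_. {0..Lam})" using le by auto
    ultimately show "k \<in> ?g ` (PiE {1..n} (\<lambda>_. {0..Lam}))" by blast
  qed
  moreover have "finite (PiE {1..n} (\<lambda>_. {0..Lam::nat}))" by (intro finite_PiE) auto
  ultimately show ?thesis using finite_subset by blast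
qed

lemma lo_states: "1 \<le> i \<Longrightarrow> i < n \<Longrightarrow> k i \<ge> 1 \<Longrightarrow> lo i k \<in> states n Lam \<longleftrightarrow> k \<in> states n Lam"
  unfolding lo_def by (rule move_states) auto

lemma ra_eq: "ra i k = k(i+1 := k (i+1) - 1, i := k i + 1)"
  unfolding ra_def by (auto simp: fun_eq_iff)

lemma ra_states: "1 \<le> i \<Longrightarrow> i < n \<Longrightarrow> k (i+1) \<ge> 1 \<Longrightarrow> ra i k \<in> states n Lam \<longleftrightarrow> k \<in> states n Lam"
  unfolding ra_eq by (rule move_states) auto

lemma Eplus_apply:
  assumes i: "1 \<le> i" "i < n" and v: "v \<in> Vsp n Lam"
  shows "Eplus n Lam i v k = cp i k * v (lo i k)"
proof -
  have "Eplus n Lam i v k = (\<Sum>k0\<in>states n Lam. if k i \<ge> 1 \<and> k0 = lo i k then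
          sqrt ((real (k0 i) + 1) * real (k0 (i+1))) * v k0 else 0)"
    unfolding Eplus_def ehat_plus_def basis_op_def diag_op_def comp_def crys_plus_iff
    by (rule sum.cong) auto
  also have "\<dots> = (if k i \<ge> 1 \<and> lo i k \<in> states n Lam then
          sqrt ((real (lo i k i) + 1) * real (lo i k (i+1))) * v (lo i k) else 0)"
    by (cases "k i \<ge> 1") (auto simp: sum.delta sum.delta' finite_states)
  also have "\<dots> = cp i k * v (lo i k)"
  proof (cases "k i \<ge> 1")
    case True
    then show ?thesis using v unfolding Vsp_def cp_def by (auto simp: lo_def of_nat_diff)
  next
    case False
    then show ?thesis by (simp add: cp_def)
  qed
  finally show ?thesis .
qed

lemma Eminus_apply:
  assumes i: "1 \<le> i" "i < n" and v: "v \<in> Vsp n Lam"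
  shows "Eminus n Lam i v k = cm i k * v (ra i k)"
proof -
  have "Eminus n Lam i v k = cm i k * (\<Sum>k0\<in>states n Lam. if k (i+1) \<ge> 1 \<and> k0 = ra i k then v k0 else 0)"
    unfolding Eminus_def ehat_minus_def basis_op_def diag_op_def comp_def crys_minus_iff cm_def
    by (intro arg_cong2[where f="(*)"] refl sum.cong)
  also have "\<dots> = cm i k * (if k (i+1) \<ge> 1 \<and> ra i k \<in> states n Lam then v (ra i k) else 0)"
    by (cases "k (i+1) \<ge> 1") (auto simp: sum.delta sum.delta' finite_states)
  also have "\<dots> = cm i k * v (ra i k)"
    using v unfolding Vsp_def cm_def by (auto simp: finite_states)
  finally show ?thesis .
qed

lemma Eplus_Vsp:
  assumes i: "1 \<le> i" "i < n" and v: "v \<in> Vsp n Lam"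
  shows "Eplus n Lam i v \<in> Vsp n Lam"
  unfolding Vsp_def
proof (intro CollectI allI impI)
  fix k assume k: "k \<notin> states n Lam"
  show "Eplus n Lam i v k = 0"
  proof (cases "k i \<ge> 1")
    case True
    then show ?thesis using lo_states[of i n k Lam] i True k v unfolding Eplus_apply[OF i v] Vsp_def by auto
  qed (simp add: Eplus_apply[OF i v] cp_def)
qed

lemma Eminus_Vsp:
  assumes i: "1 \<le> i" "i < n" and v: "v \<in> Vsp n Lam"
  shows "Eminus n Lam i v \<in> Vsp n Lam"
  unfolding Vsp_def
proof (intro CollectI allI impI)
  fix k assume k: "k \<notin> states n Lam"
  show "Eminus n Lam i v k = 0"
  proof (cases "k (i+1) \<ge> 1")
    case True
    then show ?thesis using ra_states[of i n k Lam] i True k v unfolding Eminus_apply[OF i v] Vsp_def by auto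
  qed (simp add: Eminus_apply[OF i v] cm_def)
qed

lemma Hop_Vsp: "v \<in> Vsp n Lam \<Longrightarrow> Hop i v \<in> Vsp n Lam"
  unfolding Vsp_def Hop_def diag_op_def by auto


lemma Hop_apply: "Hop i v k = (real (k i) - real (k (i+1))) * v k"
  by (simp add: Hop_def diag_op_def)

lemma hdiff_lo:
  assumes "1 \<le> i" "1 \<le> j" "k j \<ge> 1"
  shows "(real (k i) - real (k (i+1))) - (real (lo j k i) - real (lo j k (i+1))) = of_int (cartan j i)"
  using assms unfolding lo_def cartan_def by (auto simp: of_nat_diff)

lemma hdiff_ra:
  assumes "1 \<le> i" "1 \<le> j" "k (j+1) \<ge> 1"
  shows "(real (k i) - real (k (i+1))) - (real (ra j k i) - real (ra j k (i+1))) = - of_int (cartan j i)"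
  using assms unfolding ra_def cartan_def by (auto simp: of_nat_diff)

lemma rel1:
  assumes i: "1 \<le> i" and j: "1 \<le> j" "j < n" and v: "v \<in> Vsp n Lam"
  shows "comm (Hop i) (Eplus n Lam j) v = (\<lambda>k. of_int (cartan j i) * Eplus n Lam j v k)"
proof
  fix k
  have hv: "Hop i v \<in> Vsp n Lam" using v by (rule Hop_Vsp)
  have "comm (Hop i) (Eplus n Lam j) v k = cp j k * v (lo j k) *
     ((real (k i) - real (k (i+1))) - (real (lo j k i) - real (lo j k (i+1))))"
    unfolding comm_def Hop_apply Eplus_apply[OF j v] Eplus_apply[OF j hv] by (simp add: algebra_simps)
  also have "\<dots> = of_int (cartan j i) * (cp j k * v (lo j k))"
  proof (cases "k j \<ge> 1")
    case True then show ?thesis using hdiff_lo[where i=i and j=j and k=k] i j(1) True by simp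
  next
    case False then have "k j = 0" by simp
    then show ?thesis by (simp add: cp_def)
  qed
  finally show "comm (Hop i) (Eplus n Lam j) v k = of_int (cartan j i) * Eplus n Lam j v k"
    unfolding Eplus_apply[OF j v] .
qed

lemma rel2:
  assumes i: "1 \<le> i" and j: "1 \<le> j" "j < n" and v: "v \<in> Vsp n Lam"
  shows "comm (Hop i) (Eminus n Lam j) v = (\<lambda>k. - of_int (cartan j i) * Eminus n Lam j v k)"
proof
  fix k
  have hv: "Hop i v \<in> Vsp n Lam" using v by (rule Hop_Vsp)
  have "comm (Hop i) (Eminus n Lam j) v k = cm j k * v (ra j k) *
     ((real (k i) - real (k (i+1))) - (real (ra j k i) - real (ra j k (i+1))))"
    unfolding comm_def Hop_apply Eminus_apply[OF j v] Eminus_apply[OF j hv] by (simp add: algebra_simps)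
  also have "\<dots> = - of_int (cartan j i) * (cm j k * v (ra j k))"
  proof (cases "k (j+1) \<ge> 1")
    case True then show ?thesis using hdiff_ra[where i=i and j=j and k=k] i j(1) True by simp
  next
    case False then have "k (j+1) = 0" by simp
    then show ?thesis by (simp add: cm_def)
  qed
  finally show "comm (Hop i) (Eminus n Lam j) v k = - of_int (cartan j i) * Eminus n Lam j v k"
    unfolding Eminus_apply[OF j v] .
qed

lemma lo_ra_comm: "i \<noteq> j \<Longrightarrow> ra j (lo i k) = lo i (ra j k)"
  unfolding lo_def ra_def by (auto simp: fun_eq_iff)

lemma coef_comm: "i \<noteq> j \<Longrightarrow> cp i k * cm j (lo i k) = cm j k * cp i (ra j k)"
proof -
  assume ij: "i \<noteq> j"
  consider "j = i+1" | "i = j+1" | "j \<noteq> i+1" "i \<noteq> j+1" by blast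
  then show ?thesis
  proof cases
    case 1 then show ?thesis unfolding cp_def cm_def lo_def ra_def
      by (simp add: real_sqrt_mult[symmetric] algebra_simps)
  next
    case 2 then show ?thesis unfolding cp_def cm_def lo_def ra_def
      by (simp add: real_sqrt_mult[symmetric] algebra_simps)
  next
    case 3 then show ?thesis using ij unfolding cp_def cm_def lo_def ra_def
      by (simp add: real_sqrt_mult[symmetric] algebra_simps)
  qed
qed

lemma ra_lo: "k i \<ge> 1 \<Longrightarrow> ra i (lo i k) = k"
  unfolding lo_def ra_def by (auto simp: fun_eq_iff)
lemma lo_ra: "k (i+1) \<ge> 1 \<Longrightarrow> lo i (ra i k) = k"
  unfolding lo_def ra_def by (auto simp: fun_eq_iff)

lemma rel3:
  assumes i: "1 \<le> i" "i < n" and j: "1 \<le> j" "j < n" and v: "v \<in> Vsp n Lam"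
  shows "comm (Eplus n Lam i) (Eminus n Lam j) v = (if i = j then Hop i v else (\<lambda>k. 0))"
proof
  fix k
  have ev: "Eplus n Lam i v \<in> Vsp n Lam" by (rule Eplus_Vsp[OF i v])
  have mv: "Eminus n Lam j v \<in> Vsp n Lam" by (rule Eminus_Vsp[OF j v])
  have eq: "comm (Eplus n Lam i) (Eminus n Lam j) v k =
     cp i k * cm j (lo i k) * v (ra j (lo i k)) - cm j k * cp i (ra j k) * v (lo i (ra j k))"
    unfolding comm_def Eplus_apply[OF i v] Eplus_apply[OF i mv] Eminus_apply[OF j v] Eminus_apply[OF j ev]
    by (simp add: algebra_simps)
  show "comm (Eplus n Lam i) (Eminus n Lam j) v k = (if i = j then Hop i v else (\<lambda>k. 0)) k"
  proof (cases "i = j")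
    case False
    then show ?thesis unfolding eq lo_ra_comm[OF False] coef_comm[OF False] by simp
  next
    case True
    have t1: "cp i k * cm i (lo i k) * v (ra i (lo i k)) = real (k i) * (real (k (i+1)) + 1) * v k"
    proof (cases "k i \<ge> 1")
      case True then show ?thesis unfolding ra_lo[where i=i and k=k, OF True] cp_def cm_def
        by (simp add: lo_def of_nat_diff real_sqrt_mult[symmetric] algebra_simps)
    next
    case False then have "k i = 0" by simp
    then show ?thesis by (simp add: cp_def)
  qed
    have t2: "cm i k * cp i (ra i k) * v (lo i (ra i k)) = (real (k i) + 1) * real (k (i+1)) * v k"
    proof (cases "k (i+1) \<ge> 1")
      case True then show ?thesis unfolding lo_ra[where i=i and k=k, OF True] cp_def cm_def
        by (simp add: ra_def of_nat_diff real_sqrt_mult[symmetric] algebra_simps)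
    next
    case False then have "k (i+1) = 0" by simp
    then show ?thesis by (simp add: cm_def)
  qed
    show ?thesis using True eq t1 t2 unfolding Hop_apply
      by (simp add: algebra_simps)
  qed
qed


lemma sq3: "x*y*z = t^2 * q \<Longrightarrow> t \<ge> 0 \<Longrightarrow> sqrt x * (sqrt y * (sqrt z * w)) = t * sqrt q * w"
proof -
  assume h: "x*y*z = t^2 * q" "t \<ge> 0"
  have "sqrt x * (sqrt y * (sqrt z * w)) = sqrt (x*y*z) * w" by (simp add: real_sqrt_mult)
  also have "\<dots> = t * sqrt q * w" using h by (simp add: real_sqrt_mult)
  finally show ?thesis .
qed

lemma serreP_up:
  assumes i: "1 \<le> i" "i+1 < n" and v: "v \<in> Vsp n Lam"
  shows "Eplus n Lam (i) (Eplus n Lam (i) (Eplus n Lam (i+1) v)) k - 2 * Eplus n Lam (i) (Eplus n Lam (i+1) (Eplus n Lam (i) v)) k + Eplus n Lam (i+1) (Eplus n Lam (i) (Eplus n Lam (i) v)) k = 0"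
proof -
  have i0: "1 \<le> i" "i < n" and i1: "1 \<le> i+1" "i+1 < n" using i by auto
  note ap = Eplus_apply[OF i0] Eplus_apply[OF i1, simplified] Eplus_Vsp[OF i0] Eplus_Vsp[OF i1, simplified]
  define T where "T = k(i := k i - 2, i+1 := k (i+1) + 1, i+2 := k (i+2) + 1)"
  define Q where "Q = real (k i) * (real (k i) - 1) * (real (k (i+2)) + 1) * (real (k (i+1)) + 1)"
  have e0: "Eplus n Lam (i) (Eplus n Lam (i) (Eplus n Lam (i+1) v)) k = cp (i) k * (cp (i) (lo (i) k) * (cp (i+1) (lo (i) (lo (i) k)) * v (lo (i+1) (lo (i) (lo (i) k)))))"
    using v by (simp add: ap)
  have f0: "cp (i) k * (cp (i) (lo (i) k) * (cp (i+1) (lo (i) (lo (i) k)) * v (lo (i+1) (lo (i) (lo (i) k))))) = (real (k (i+1)) + 2) * sqrt Q * v T"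
  proof (cases "k (i) \<ge> 2")
    case True
    have "lo (i+1) (lo (i) (lo (i) k)) = T" using True unfolding T_def lo_def by (auto simp: fun_eq_iff)
    moreover have "cp (i) k * (cp (i) (lo (i) k) * (cp (i+1) (lo (i) (lo (i) k)) * w)) = (real (k (i+1)) + 2) * sqrt Q * w" for w
      unfolding cp_def using True by (intro sq3) (auto simp: Q_def lo_def of_nat_diff power2_eq_square algebra_simps)
    ultimately show ?thesis by simp
  next
    case False
    then have "k (i) = 0 \<or> k (i) = 1" by auto
    then show ?thesis by (elim disjE) (simp_all add: cp_def lo_def Q_def)
  qed
  have e1: "Eplus n Lam (i) (Eplus n Lam (i+1) (Eplus n Lam (i) v)) k = cp (i) k * (cp (i+1) (lo (i) k) * (cp (i) (lo (i+1) (lo (i) k)) * v (lo (i) (lo (i+1) (lo (i) k)))))"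
    using v by (simp add: ap)
  have f1: "cp (i) k * (cp (i+1) (lo (i) k) * (cp (i) (lo (i+1) (lo (i) k)) * v (lo (i) (lo (i+1) (lo (i) k))))) = (real (k (i+1)) + 1) * sqrt Q * v T"
  proof (cases "k (i) \<ge> 2")
    case True
    have "lo (i) (lo (i+1) (lo (i) k)) = T" using True unfolding T_def lo_def by (auto simp: fun_eq_iff)
    moreover have "cp (i) k * (cp (i+1) (lo (i) k) * (cp (i) (lo (i+1) (lo (i) k)) * w)) = (real (k (i+1)) + 1) * sqrt Q * w" for w
      unfolding cp_def using True by (intro sq3) (auto simp: Q_def lo_def of_nat_diff power2_eq_square algebra_simps)
    ultimately show ?thesis by simp
  next
    case False
    then have "k (i) = 0 \<or> k (i) = 1" by auto
    then show ?thesis by (elim disjE) (simp_all add: cp_def lo_def Q_def)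
  qed
  have e2: "Eplus n Lam (i+1) (Eplus n Lam (i) (Eplus n Lam (i) v)) k = cp (i+1) k * (cp (i) (lo (i+1) k) * (cp (i) (lo (i) (lo (i+1) k)) * v (lo (i) (lo (i) (lo (i+1) k)))))"
    using v by (simp add: ap)
  have f2: "cp (i+1) k * (cp (i) (lo (i+1) k) * (cp (i) (lo (i) (lo (i+1) k)) * v (lo (i) (lo (i) (lo (i+1) k))))) = (real (k (i+1))) * sqrt Q * v T"
  proof (cases "k (i) \<ge> 2 \<and> k (i+1) \<ge> 1")
    case True
    have "lo (i) (lo (i) (lo (i+1) k)) = T" using True unfolding T_def lo_def by (auto simp: fun_eq_iff)
    moreover have "cp (i+1) k * (cp (i) (lo (i+1) k) * (cp (i) (lo (i) (lo (i+1) k)) * w)) = (real (k (i+1))) * sqrt Q * w" for w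
      unfolding cp_def using True by (intro sq3) (auto simp: Q_def lo_def of_nat_diff power2_eq_square algebra_simps)
    ultimately show ?thesis by simp
  next
    case False
    then have "k (i) = 0 \<or> k (i) = 1 \<or> k (i+1) = 0" by auto
    then show ?thesis by (elim disjE) (simp_all add: cp_def lo_def Q_def)
  qed
  show ?thesis unfolding e0 e1 e2 f0 f1 f2 by (simp add: algebra_simps)
qed

lemma serreP_down:
  assumes i: "1 \<le> i" "i+1 < n" and v: "v \<in> Vsp n Lam"
  shows "Eplus n Lam (i+1) (Eplus n Lam (i+1) (Eplus n Lam (i) v)) k - 2 * Eplus n Lam (i+1) (Eplus n Lam (i) (Eplus n Lam (i+1) v)) k + Eplus n Lam (i) (Eplus n Lam (i+1) (Eplus n Lam (i+1) v)) k = 0"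
proof -
  have i0: "1 \<le> i" "i < n" and i1: "1 \<le> i+1" "i+1 < n" using i by auto
  note ap = Eplus_apply[OF i0] Eplus_apply[OF i1, simplified] Eplus_Vsp[OF i0] Eplus_Vsp[OF i1, simplified]
  define T where "T = k(i := k i - 1, i+1 := k (i+1) - 1, i+2 := k (i+2) + 2)"
  define Q where "Q = real (k i) * real (k (i+1)) * (real (k (i+2)) + 1) * (real (k (i+2)) + 2)"
  have e0: "Eplus n Lam (i+1) (Eplus n Lam (i+1) (Eplus n Lam (i) v)) k = cp (i+1) k * (cp (i+1) (lo (i+1) k) * (cp (i) (lo (i+1) (lo (i+1) k)) * v (lo (i) (lo (i+1) (lo (i+1) k)))))"
    using v by (simp add: ap)
  have f0: "cp (i+1) k * (cp (i+1) (lo (i+1) k) * (cp (i) (lo (i+1) (lo (i+1) k)) * v (lo (i) (lo (i+1) (lo (i+1) k))))) = (real (k (i+1)) - 1) * sqrt Q * v T"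
  proof (cases "k (i) \<ge> 1 \<and> k (i+1) \<ge> 2")
    case True
    have "lo (i) (lo (i+1) (lo (i+1) k)) = T" using True unfolding T_def lo_def by (auto simp: fun_eq_iff)
    moreover have "cp (i+1) k * (cp (i+1) (lo (i+1) k) * (cp (i) (lo (i+1) (lo (i+1) k)) * w)) = (real (k (i+1)) - 1) * sqrt Q * w" for w
      unfolding cp_def using True by (intro sq3) (auto simp: Q_def lo_def of_nat_diff power2_eq_square algebra_simps)
    ultimately show ?thesis by simp
  next
    case False
    then have "k (i) = 0 \<or> k (i+1) = 0 \<or> k (i+1) = 1" by auto
    then show ?thesis by (elim disjE) (simp_all add: cp_def lo_def Q_def)
  qed
  have e1: "Eplus n Lam (i+1) (Eplus n Lam (i) (Eplus n Lam (i+1) v)) k = cp (i+1) k * (cp (i) (lo (i+1) k) * (cp (i+1) (lo (i) (lo (i+1) k)) * v (lo (i+1) (lo (i) (lo (i+1) k)))))"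
    using v by (simp add: ap)
  have f1: "cp (i+1) k * (cp (i) (lo (i+1) k) * (cp (i+1) (lo (i) (lo (i+1) k)) * v (lo (i+1) (lo (i) (lo (i+1) k))))) = (real (k (i+1))) * sqrt Q * v T"
  proof (cases "k (i) \<ge> 1 \<and> k (i+1) \<ge> 1")
    case True
    have "lo (i+1) (lo (i) (lo (i+1) k)) = T" using True unfolding T_def lo_def by (auto simp: fun_eq_iff)
    moreover have "cp (i+1) k * (cp (i) (lo (i+1) k) * (cp (i+1) (lo (i) (lo (i+1) k)) * w)) = (real (k (i+1))) * sqrt Q * w" for w
      unfolding cp_def using True by (intro sq3) (auto simp: Q_def lo_def of_nat_diff power2_eq_square algebra_simps)
    ultimately show ?thesis by simp
  next
    case False
    then have "k (i) = 0 \<or> k (i+1) = 0" by auto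
    then show ?thesis by (elim disjE) (simp_all add: cp_def lo_def Q_def)
  qed
  have e2: "Eplus n Lam (i) (Eplus n Lam (i+1) (Eplus n Lam (i+1) v)) k = cp (i) k * (cp (i+1) (lo (i) k) * (cp (i+1) (lo (i+1) (lo (i) k)) * v (lo (i+1) (lo (i+1) (lo (i) k)))))"
    using v by (simp add: ap)
  have f2: "cp (i) k * (cp (i+1) (lo (i) k) * (cp (i+1) (lo (i+1) (lo (i) k)) * v (lo (i+1) (lo (i+1) (lo (i) k))))) = (real (k (i+1)) + 1) * sqrt Q * v T"
  proof (cases "k (i) \<ge> 1 \<and> k (i+1) \<ge> 1")
    case True
    have "lo (i+1) (lo (i+1) (lo (i) k)) = T" using True unfolding T_def lo_def by (auto simp: fun_eq_iff)
    moreover have "cp (i) k * (cp (i+1) (lo (i) k) * (cp (i+1) (lo (i+1) (lo (i) k)) * w)) = (real (k (i+1)) + 1) * sqrt Q * w" for w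
      unfolding cp_def using True by (intro sq3) (auto simp: Q_def lo_def of_nat_diff power2_eq_square algebra_simps)
    ultimately show ?thesis by simp
  next
    case False
    then have "k (i) = 0 \<or> k (i+1) = 0" by auto
    then show ?thesis by (elim disjE) (simp_all add: cp_def lo_def Q_def)
  qed
  show ?thesis unfolding e0 e1 e2 f0 f1 f2 by (simp add: algebra_simps)
qed

lemma serreM_up:
  assumes i: "1 \<le> i" "i+1 < n" and v: "v \<in> Vsp n Lam"
  shows "Eminus n Lam (i) (Eminus n Lam (i) (Eminus n Lam (i+1) v)) k - 2 * Eminus n Lam (i) (Eminus n Lam (i+1) (Eminus n Lam (i) v)) k + Eminus n Lam (i+1) (Eminus n Lam (i) (Eminus n Lam (i) v)) k = 0"
proof -
  have i0: "1 \<le> i" "i < n" and i1: "1 \<le> i+1" "i+1 < n" using i by auto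
  note ap = Eminus_apply[OF i0] Eminus_apply[OF i1, simplified] Eminus_Vsp[OF i0] Eminus_Vsp[OF i1, simplified]
  define T where "T = k(i := k i + 2, i+1 := k (i+1) - 1, i+2 := k (i+2) - 1)"
  define Q where "Q = (real (k i) + 1) * (real (k i) + 2) * real (k (i+1)) * real (k (i+2))"
  have e0: "Eminus n Lam (i) (Eminus n Lam (i) (Eminus n Lam (i+1) v)) k = cm (i) k * (cm (i) (ra (i) k) * (cm (i+1) (ra (i) (ra (i) k)) * v (ra (i+1) (ra (i) (ra (i) k)))))"
    using v by (simp add: ap)
  have f0: "cm (i) k * (cm (i) (ra (i) k) * (cm (i+1) (ra (i) (ra (i) k)) * v (ra (i+1) (ra (i) (ra (i) k))))) = (real (k (i+1)) - 1) * sqrt Q * v T"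
  proof (cases "k (i+1) \<ge> 2 \<and> k (i+2) \<ge> 1")
    case True
    have "ra (i+1) (ra (i) (ra (i) k)) = T" using True unfolding T_def ra_def by (auto simp: fun_eq_iff)
    moreover have "cm (i) k * (cm (i) (ra (i) k) * (cm (i+1) (ra (i) (ra (i) k)) * w)) = (real (k (i+1)) - 1) * sqrt Q * w" for w
      unfolding cm_def using True by (intro sq3) (auto simp: Q_def ra_def of_nat_diff power2_eq_square algebra_simps)
    ultimately show ?thesis by simp
  next
    case False
    then have "k (i+1) = 0 \<or> k (i+1) = 1 \<or> k (i+2) = 0" by auto
    then show ?thesis by (elim disjE) (simp_all add: cm_def ra_def Q_def)
  qed
  have e1: "Eminus n Lam (i) (Eminus n Lam (i+1) (Eminus n Lam (i) v)) k = cm (i) k * (cm (i+1) (ra (i) k) * (cm (i) (ra (i+1) (ra (i) k)) * v (ra (i) (ra (i+1) (ra (i) k)))))"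
    using v by (simp add: ap)
  have f1: "cm (i) k * (cm (i+1) (ra (i) k) * (cm (i) (ra (i+1) (ra (i) k)) * v (ra (i) (ra (i+1) (ra (i) k))))) = (real (k (i+1))) * sqrt Q * v T"
  proof (cases "k (i+1) \<ge> 1 \<and> k (i+2) \<ge> 1")
    case True
    have "ra (i) (ra (i+1) (ra (i) k)) = T" using True unfolding T_def ra_def by (auto simp: fun_eq_iff)
    moreover have "cm (i) k * (cm (i+1) (ra (i) k) * (cm (i) (ra (i+1) (ra (i) k)) * w)) = (real (k (i+1))) * sqrt Q * w" for w
      unfolding cm_def using True by (intro sq3) (auto simp: Q_def ra_def of_nat_diff power2_eq_square algebra_simps)
    ultimately show ?thesis by simp
  next
    case False
    then have "k (i+1) = 0 \<or> k (i+2) = 0" by auto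
    then show ?thesis by (elim disjE) (simp_all add: cm_def ra_def Q_def)
  qed
  have e2: "Eminus n Lam (i+1) (Eminus n Lam (i) (Eminus n Lam (i) v)) k = cm (i+1) k * (cm (i) (ra (i+1) k) * (cm (i) (ra (i) (ra (i+1) k)) * v (ra (i) (ra (i) (ra (i+1) k)))))"
    using v by (simp add: ap)
  have f2: "cm (i+1) k * (cm (i) (ra (i+1) k) * (cm (i) (ra (i) (ra (i+1) k)) * v (ra (i) (ra (i) (ra (i+1) k))))) = (real (k (i+1)) + 1) * sqrt Q * v T"
  proof (cases "k (i+1) \<ge> 1 \<and> k (i+2) \<ge> 1")
    case True
    have "ra (i) (ra (i) (ra (i+1) k)) = T" using True unfolding T_def ra_def by (auto simp: fun_eq_iff)
    moreover have "cm (i+1) k * (cm (i) (ra (i+1) k) * (cm (i) (ra (i) (ra (i+1) k)) * w)) = (real (k (i+1)) + 1) * sqrt Q * w" for w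
      unfolding cm_def using True by (intro sq3) (auto simp: Q_def ra_def of_nat_diff power2_eq_square algebra_simps)
    ultimately show ?thesis by simp
  next
    case False
    then have "k (i+1) = 0 \<or> k (i+2) = 0" by auto
    then show ?thesis by (elim disjE) (simp_all add: cm_def ra_def Q_def)
  qed
  show ?thesis unfolding e0 e1 e2 f0 f1 f2 by (simp add: algebra_simps)
qed

lemma serreM_down:
  assumes i: "1 \<le> i" "i+1 < n" and v: "v \<in> Vsp n Lam"
  shows "Eminus n Lam (i+1) (Eminus n Lam (i+1) (Eminus n Lam (i) v)) k - 2 * Eminus n Lam (i+1) (Eminus n Lam (i) (Eminus n Lam (i+1) v)) k + Eminus n Lam (i) (Eminus n Lam (i+1) (Eminus n Lam (i+1) v)) k = 0"
proof -
  have i0: "1 \<le> i" "i < n" and i1: "1 \<le> i+1" "i+1 < n" using i by auto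
  note ap = Eminus_apply[OF i0] Eminus_apply[OF i1, simplified] Eminus_Vsp[OF i0] Eminus_Vsp[OF i1, simplified]
  define T where "T = k(i := k i + 1, i+1 := k (i+1) + 1, i+2 := k (i+2) - 2)"
  define Q where "Q = (real (k i) + 1) * (real (k (i+1)) + 1) * real (k (i+2)) * (real (k (i+2)) - 1)"
  have e0: "Eminus n Lam (i+1) (Eminus n Lam (i+1) (Eminus n Lam (i) v)) k = cm (i+1) k * (cm (i+1) (ra (i+1) k) * (cm (i) (ra (i+1) (ra (i+1) k)) * v (ra (i) (ra (i+1) (ra (i+1) k)))))"
    using v by (simp add: ap)
  have f0: "cm (i+1) k * (cm (i+1) (ra (i+1) k) * (cm (i) (ra (i+1) (ra (i+1) k)) * v (ra (i) (ra (i+1) (ra (i+1) k))))) = (real (k (i+1)) + 2) * sqrt Q * v T"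
  proof (cases "k (i+2) \<ge> 2")
    case True
    have "ra (i) (ra (i+1) (ra (i+1) k)) = T" using True unfolding T_def ra_def by (auto simp: fun_eq_iff)
    moreover have "cm (i+1) k * (cm (i+1) (ra (i+1) k) * (cm (i) (ra (i+1) (ra (i+1) k)) * w)) = (real (k (i+1)) + 2) * sqrt Q * w" for w
      unfolding cm_def using True by (intro sq3) (auto simp: Q_def ra_def of_nat_diff power2_eq_square algebra_simps)
    ultimately show ?thesis by simp
  next
    case False
    then have "k (i+2) = 0 \<or> k (i+2) = 1" by auto
    then show ?thesis by (elim disjE) (simp_all add: cm_def ra_def Q_def)
  qed
  have e1: "Eminus n Lam (i+1) (Eminus n Lam (i) (Eminus n Lam (i+1) v)) k = cm (i+1) k * (cm (i) (ra (i+1) k) * (cm (i+1) (ra (i) (ra (i+1) k)) * v (ra (i+1) (ra (i) (ra (i+1) k)))))"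
    using v by (simp add: ap)
  have f1: "cm (i+1) k * (cm (i) (ra (i+1) k) * (cm (i+1) (ra (i) (ra (i+1) k)) * v (ra (i+1) (ra (i) (ra (i+1) k))))) = (real (k (i+1)) + 1) * sqrt Q * v T"
  proof (cases "k (i+2) \<ge> 2")
    case True
    have "ra (i+1) (ra (i) (ra (i+1) k)) = T" using True unfolding T_def ra_def by (auto simp: fun_eq_iff)
    moreover have "cm (i+1) k * (cm (i) (ra (i+1) k) * (cm (i+1) (ra (i) (ra (i+1) k)) * w)) = (real (k (i+1)) + 1) * sqrt Q * w" for w
      unfolding cm_def using True by (intro sq3) (auto simp: Q_def ra_def of_nat_diff power2_eq_square algebra_simps)
    ultimately show ?thesis by simp
  next
    case False
    then have "k (i+2) = 0 \<or> k (i+2) = 1" by auto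
    then show ?thesis by (elim disjE) (simp_all add: cm_def ra_def Q_def)
  qed
  have e2: "Eminus n Lam (i) (Eminus n Lam (i+1) (Eminus n Lam (i+1) v)) k = cm (i) k * (cm (i+1) (ra (i) k) * (cm (i+1) (ra (i+1) (ra (i) k)) * v (ra (i+1) (ra (i+1) (ra (i) k)))))"
    using v by (simp add: ap)
  have f2: "cm (i) k * (cm (i+1) (ra (i) k) * (cm (i+1) (ra (i+1) (ra (i) k)) * v (ra (i+1) (ra (i+1) (ra (i) k))))) = (real (k (i+1))) * sqrt Q * v T"
  proof (cases "k (i+2) \<ge> 2 \<and> k (i+1) \<ge> 1")
    case True
    have "ra (i+1) (ra (i+1) (ra (i) k)) = T" using True unfolding T_def ra_def by (auto simp: fun_eq_iff)
    moreover have "cm (i) k * (cm (i+1) (ra (i) k) * (cm (i+1) (ra (i+1) (ra (i) k)) * w)) = (real (k (i+1))) * sqrt Q * w" for w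
      unfolding cm_def using True by (intro sq3) (auto simp: Q_def ra_def of_nat_diff power2_eq_square algebra_simps)
    ultimately show ?thesis by simp
  next
    case False
    then have "k (i+2) = 0 \<or> k (i+2) = 1 \<or> k (i+1) = 0" by auto
    then show ?thesis by (elim disjE) (simp_all add: cm_def ra_def Q_def)
  qed
  show ?thesis unfolding e0 e1 e2 f0 f1 f2 by (simp add: algebra_simps)
qed

lemma serre_0: "serre A B 0 v k = A (B v) k - B (A v) k"
  by (simp add: serre_def)

lemma serre_m1: "serre A B (-1) v k = A (A (B v)) k - 2 * A (B (A v)) k + B (A (A v)) k"
  by (simp add: serre_def numeral_2_eq_2 atLeast0_atMost_Suc)

lemma farP:
  assumes i: "1 \<le> i" "i < n" and j: "1 \<le> j" "j < n" and v: "v \<in> Vsp n Lam"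
    and d: "i \<noteq> j" "j \<noteq> i+1" "i \<noteq> j+1"
  shows "Eplus n Lam i (Eplus n Lam j v) k = Eplus n Lam j (Eplus n Lam i v) k"
proof -
  have "cp j (lo i k) = cp j k" "cp i (lo j k) = cp i k" "lo j (lo i k) = lo i (lo j k)"
    using d unfolding cp_def lo_def by (auto simp: fun_eq_iff)
  then show ?thesis using v
    by (simp add: Eplus_apply[OF i] Eplus_apply[OF j] Eplus_Vsp[OF i] Eplus_Vsp[OF j])
qed

lemma farM:
  assumes i: "1 \<le> i" "i < n" and j: "1 \<le> j" "j < n" and v: "v \<in> Vsp n Lam"
    and d: "i \<noteq> j" "j \<noteq> i+1" "i \<noteq> j+1"
  shows "Eminus n Lam i (Eminus n Lam j v) k = Eminus n Lam j (Eminus n Lam i v) k"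
proof -
  have "cm j (ra i k) = cm j k" "cm i (ra j k) = cm i k" "ra j (ra i k) = ra i (ra j k)"
    using d unfolding cm_def ra_def by (auto simp: fun_eq_iff)
  then show ?thesis using v
    by (simp add: Eminus_apply[OF i] Eminus_apply[OF j] Eminus_Vsp[OF i] Eminus_Vsp[OF j] mult.left_commute)
qed

theorem mainTheorem1:
  fixes n Lam :: nat
  assumes "n \<ge> 2" and "Lam > 0"
  shows "\<forall>v \<in> Vsp n Lam. \<forall>i \<in> {1..n-1}. \<forall>j \<in> {1..n-1}.
     comm (Hop i) (Eplus n Lam j) v = (\<lambda>k. of_int (cartan j i) * Eplus n Lam j v k) \<and>
     comm (Hop i) (Eminus n Lam j) v = (\<lambda>k. - of_int (cartan j i) * Eminus n Lam j v k) \<and>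
     comm (Eplus n Lam i) (Eminus n Lam j) v = (if i = j then Hop i v else (\<lambda>k. 0)) \<and>
     comm (Hop i) (Hop j) v = (\<lambda>k. 0) \<and>
     (i \<noteq> j \<longrightarrow> serre (Eplus n Lam i) (Eplus n Lam j) (cartan i j) v = (\<lambda>k. 0)) \<and>
     (i \<noteq> j \<longrightarrow> serre (Eminus n Lam i) (Eminus n Lam j) (cartan i j) v = (\<lambda>k. 0))"
proof (intro ballI conjI impI)
  fix v i j assume v: "v \<in> Vsp n Lam" and iI: "i \<in> {1..n-1}" and jI: "j \<in> {1..n-1}"
  have i: "1 \<le> i" "i < n" and j: "1 \<le> j" "j < n" using iI jI assms by auto
  show "comm (Hop i) (Eplus n Lam j) v = (\<lambda>k. of_int (cartan j i) * Eplus n Lam j v k)"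
    by (rule rel1[OF i(1) j v])
  show "comm (Hop i) (Eminus n Lam j) v = (\<lambda>k. - of_int (cartan j i) * Eminus n Lam j v k)"
    by (rule rel2[OF i(1) j v])
  show "comm (Eplus n Lam i) (Eminus n Lam j) v = (if i = j then Hop i v else (\<lambda>k. 0))"
    by (rule rel3[OF i j v])
  show "comm (Hop i) (Hop j) v = (\<lambda>k. 0)"
    by (simp add: comm_def Hop_apply fun_eq_iff)
  assume ij: "i \<noteq> j"
  consider (up) "j = i+1" | (down) "i = j+1" | (far) "j \<noteq> i+1" "i \<noteq> j+1" by blast
  then have "serre (Eplus n Lam i) (Eplus n Lam j) (cartan i j) v = (\<lambda>k. 0) \<and>
             serre (Eminus n Lam i) (Eminus n Lam j) (cartan i j) v = (\<lambda>k. 0)"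
  proof cases
    case up
    then have c: "cartan i j = -1" by (simp add: cartan_def)
    have jj: "i+1 < n" using up j by simp
    show ?thesis using serreP_up[OF i(1) jj v] serreM_up[OF i(1) jj v] c up
      by (simp add: fun_eq_iff serre_m1)
  next
    case down
    then have c: "cartan i j = -1" by (simp add: cartan_def)
    have jj: "j+1 < n" using down i by simp
    show ?thesis using serreP_down[OF j(1) jj v] serreM_down[OF j(1) jj v] c down
      by (simp add: fun_eq_iff serre_m1)
  next
    case far
    then have c: "cartan i j = 0" using ij i j by (auto simp: cartan_def)
    show ?thesis unfolding c fun_eq_iff serre_0
      using farP[OF i j v ij far(1) far(2)] farM[OF i j v ij far(1) far(2)] by simp
  qed
  then show "serre (Eplus n Lam i) (Eplus n Lam j) (cartan i j) v = (\<lambda>k. 0)"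
    "serre (Eminus n Lam i) (Eminus n Lam j) (cartan i j) v = (\<lambda>k. 0)" by auto
qed

end
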